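(* Let $\Sigma$ be a finite alphabet, $S\in\Sigma^m$, and $a,a'\in\Sigma^m$ with $\mathrm{rep}_{\mathrm{Foc}(S)}(a)=\mathrm{rep}_{\mathrm{Foc}(S)}(a')$. Then $f^S_{\mathrm{BOM}}(a)=f^S_{\mathrm{BOM}}(a')$ and $g^S_{\mathrm{BOM}}(a)=g^S_{\mathrm{BOM}}(a')$.
   Context: For $S=s_0\cdots s_{m-1}$ let $p=p_1\cdots p_m=S^{\mathrm{rev}}$. The factor oracle of $p$ is the deterministic automaton with states $0,\dots,m$, start state $0$, built as follows: set $\mathrm{sl}(0)=-1$; for $i=1,\dots,m$: add transition $i-1\xrightarrow{p_i} i$; let $k=\mathrm{sl}(i-1)$; while $k\ne-1$ and $k$ has no transition labelled $p_i$, add $k\xrightarrow{p_i} i$ and set $k=\mathrm{sl}(k)$; then $\mathrm{sl}(i)=-1$ if $k=-1$, else the target of $k$'s transition labelled $p_i$. Missing transitions lead to a sink FAIL. $\mathrm{Foc}(S)$ is the set of $x\in\Sigma^*$ such that the factor oracle is not in FAIL after reading $x^{\mathrm{rev}}$, and $\mathrm{rep}_{\mathrm{Foc}(S)}(a)$ is the longest suffix of $a$ (including $\varepsilon$) in $\mathrm{Foc}(S)$. For a window $w=w_0\cdots w_{m-1}$, the oracle reads $w_{m-1},w_{m-2},\dots$; let $k^S_w$ be the number of transitions made before entering FAIL (excluding the transition into FAIL). Cost: $f^S_{\mathrm{BOM}}(w)=m$ if $w=S$, else $k^S_w+1$. Shift: $g^S_{\mathrm{BOM}}(w)=1$ if $w=S$,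 else $m-k^S_w$. *)

theory Defs
  imports Main
begin

type_synonym 'a trans = "nat \<Rightarrow> 'a \<Rightarrow> nat option"

(* Inner while loop of the factor-automaton (FO) construction, with a fuel argument
  (the suffix-link chain strictly decreases, so fuel i+1 suffices at step i). *)
fun fo_loop :: "nat \<Rightarrow> 'a trans \<Rightarrow> (nat \<Rightarrow> int) \<Rightarrow> 'a \<Rightarrow> nat \<Rightarrow> int \<Rightarrow> 'a trans \<times> int" where
  "fo_loop 0 \<delta> sl c i k = (\<delta>, k)"
| "fo_loop (Suc n) \<delta> sl c i k =
     (if k = -1 then (\<delta>, k)
      else if \<delta> (nat k) c \<noteq> None then (\<delta>, k)
      else fo_loop n (\<delta>(nat k := (\<delta> (nat k))(c := Some i))) sl c i (sl (nat k)))"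

(* fo_build p i = (transitions, suffix links) after processing p_1 .. p_i. *)
fun fo_build :: "'a list \<Rightarrow> nat \<Rightarrow> 'a trans \<times> (nat \<Rightarrow> int)" where
  "fo_build p 0 = ((\<lambda>_ _. None), (\<lambda>_. -1))"
| "fo_build p (Suc i) =
     (let (\<delta>, sl) = fo_build p i;
          c = p ! i;
          \<delta>1 = \<delta>(i := (\<delta> i)(c := Some (Suc i)));
          (\<delta>2, k) = fo_loop (Suc i) \<delta>1 sl c (Suc i) (sl i)
      in (\<delta>2, sl(Suc i := (if k = -1 then -1 else int (the (\<delta>2 (nat k) c))))))"

definition factor_orc :: "'a list \<Rightarrow> 'a trans" where
  "factor_orc S = fst (fo_build (rev S) (length S))"

fun run :: "'a trans \<Rightarrow> nat \<Rightarrow> 'a list \<Rightarrow> nat option" where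
  "run \<delta> q [] = Some q"
| "run \<delta> q (c # cs) = (case \<delta> q c of None \<Rightarrow> None | Some q' \<Rightarrow> run \<delta> q' cs)"

fun steps :: "'a trans \<Rightarrow> nat \<Rightarrow> 'a list \<Rightarrow> nat" where
  "steps \<delta> q [] = 0"
| "steps \<delta> q (c # cs) = (case \<delta> q c of None \<Rightarrow> 0 | Some q' \<Rightarrow> Suc (steps \<delta> q' cs))"

definition Foc :: "'a list \<Rightarrow> 'a list set" where
  "Foc S = {x. run (factor_orc S) 0 (rev x) \<noteq> None}"

definition rep :: "'a list set \<Rightarrow> 'a list \<Rightarrow> 'a list" where
  "rep L a = drop (LEAST n. drop n a \<in> L) a"

definition kBOM :: "'a list \<Rightarrow> 'a list \<Rightarrow> nat" where
  "kBOM S w = steps (factor_orc S) 0 (rev w)"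

definition fBOM :: "'a list \<Rightarrow> 'a list \<Rightarrow> nat" where
  "fBOM S w = (if w = S then length S else kBOM S w + 1)"

definition gBOM :: "'a list \<Rightarrow> 'a list \<Rightarrow> nat" where
  "gBOM S w = (if w = S then 1 else length S - kBOM S w)"

end

theory Submission
  imports Defs
begin

lemma loop_pres:
  "\<delta> q c' = Some x \<Longrightarrow> fst (fo_loop n \<delta> sl c i k) q c' = Some x"
proof (induction n arbitrary: \<delta> k)
  case 0 then show ?case by simp
next
  case (Suc n)
  show ?case
  proof (cases "k = -1 \<or> \<delta> (nat k) c \<noteq> None")
    case True then show ?thesis using Suc.prems by auto
  next
    case False
    have "(\<delta>(nat k := (\<delta> (nat k))(c := Some i))) q c' = Some x"
      using Suc.prems False by auto
    then show ?thesis using False Suc.IH by simp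
  qed
qed

lemma build_pres:
  "fst (fo_build p n) q c' = Some x \<Longrightarrow> n \<le> n' \<Longrightarrow> q < n \<Longrightarrow> fst (fo_build p n') q c' = Some x"
proof (induction n' arbitrary: n)
  case 0 then show ?case by simp
next
  case (Suc n')
  show ?case
  proof (cases "n = Suc n'")
    case True then show ?thesis using Suc.prems by simp
  next
    case False
    then have h: "fst (fo_build p n') q c' = Some x" using Suc by simp
    obtain \<delta> sl where e: "fo_build p n' = (\<delta>, sl)" by fastforce
    obtain \<delta>2 k where e2: "fo_loop (Suc n') (\<delta>(n' := (\<delta> n')(p!n' := Some (Suc n')))) sl (p!n') (Suc n') (sl n') = (\<delta>2, k)"
      by fastforce
    have "(\<delta>(n' := (\<delta> n')(p!n' := Some (Suc n')))) q c' = Some x"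
      using h e Suc.prems False by (cases "c' = p!n'") auto
    then have "\<delta>2 q c' = Some x" using loop_pres[of _ q c' x "Suc n'" sl "p!n'" "Suc n'" "sl n'"] e2
      by (metis fst_conv)
    then show ?thesis using e e2 by (simp add: Let_def)
  qed
qed

lemma build_spine:
  "q < n \<Longrightarrow> fst (fo_build p n) q (p!q) = Some (Suc q)"
proof -
  assume q: "q < n"
  have "fst (fo_build p (Suc q)) q (p!q) = Some (Suc q)"
  proof -
    obtain \<delta> sl where e: "fo_build p q = (\<delta>, sl)" by fastforce
    obtain \<delta>2 k where e2: "fo_loop (Suc q) (\<delta>(q := (\<delta> q)(p!q := Some (Suc q)))) sl (p!q) (Suc q) (sl q) = (\<delta>2, k)"
      by fastforce
    have "\<delta>2 q (p!q) = Some (Suc q)"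
      using loop_pres[of "\<delta>(q := (\<delta> q)(p!q := Some (Suc q)))" q "p!q" "Suc q" "Suc q" sl "p!q" "Suc q" "sl q"] e2
      by (metis fst_conv fun_upd_same)
    then show ?thesis using e e2 by (simp add: Let_def)
  qed
  then show ?thesis using build_pres[of p "Suc q" q "p!q" "Suc q" n] q by simp
qed

lemma run_spine:
  assumes sp: "\<And>q. q < length p \<Longrightarrow> \<delta> q (p!q) = Some (Suc q)"
  shows "xs = drop q p \<Longrightarrow> run \<delta> q xs \<noteq> None"
proof (induction xs arbitrary: q)
  case Nil then show ?case by simp
next
  case (Cons x xs)
  have ql: "q < length p" using Cons.prems by (metis drop_all list.distinct(1) not_le)
  have "p ! q = x" "drop (Suc q) p = xs" using Cons.prems ql
    by (metis Cons_nth_drop_Suc list.inject)+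
  then show ?case using sp[OF ql] Cons.IH[of "Suc q"] by simp
qed

lemma run_take:
  "j \<le> length w \<Longrightarrow> (run \<delta> q (take j w) \<noteq> None) = (j \<le> steps \<delta> q w)"
proof (induction w arbitrary: q j)
  case Nil then show ?case by simp
next
  case (Cons c w)
  show ?case
  proof (cases j)
    case 0 then show ?thesis by simp
  next
    case (Suc j') then show ?thesis using Cons by (cases "\<delta> q c") auto
  qed
qed

lemma steps_le: "steps \<delta> q w \<le> length w"
  by (induction w arbitrary: q) (auto split: option.splits)

lemma rep_eq:
  "rep (Foc S) a = drop (length a - kBOM S a) a"
proof -
  let ?k = "kBOM S a"
  have k: "?k \<le> length a" unfolding kBOM_def using steps_le by (metis length_rev)
  have iff: "drop n a \<in> Foc S \<longleftrightarrow> length a - n \<le> ?k" for n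
    unfolding Foc_def kBOM_def using run_take[where \<delta>="factor_orc S" and q=0 and j="length a - n" and w="rev a"]
    by (simp add: rev_drop)
  have "(LEAST n. drop n a \<in> Foc S) = length a - ?k"
    unfolding iff by (rule Least_equality) (use k in auto)
  then show ?thesis unfolding rep_def by simp
qed

lemma kS: "kBOM S S = length S"
proof -
  have sp: "\<And>q. q < length (rev S) \<Longrightarrow> factor_orc S q (rev S!q) = Some (Suc q)"
    unfolding factor_orc_def using build_spine by simp
  have "run (factor_orc S) 0 (rev S) \<noteq> None"
    using run_spine[where p="rev S" and \<delta>="factor_orc S" and xs="rev S" and q=0] sp by simp
  then have "length S \<le> kBOM S S" unfolding kBOM_def
    using run_take[where q=0 and j="length S" and w="rev S"] by simp
  moreover have "kBOM S S \<le> length S" unfolding kBOM_def using steps_le by (metis length_rev)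
  ultimately show ?thesis by simp
qed

theorem lemma21:
  fixes S a a' :: "'a::finite list" and m :: nat
  assumes "length S = m" and "length a = m" and "length a' = m"
    and "rep (Foc S) a = rep (Foc S) a'"
  shows "fBOM S a = fBOM S a' \<and> gBOM S a = gBOM S a'"
proof -
  have ka: "kBOM S a \<le> m" unfolding kBOM_def using steps_le assms(2) by (metis length_rev)
  have ka': "kBOM S a' \<le> m" unfolding kBOM_def using steps_le assms(3) by (metis length_rev)
  have keq: "kBOM S a = kBOM S a'"
    using arg_cong[OF assms(4), of length] ka ka' assms(2,3) by (simp add: rep_eq)
  have aa: "a = S \<longleftrightarrow> a' = S"
  proof
    assume "a = S"
    then have "kBOM S a' = m" using keq kS[of S] assms(1) by simp
    then show "a' = S" using assms(4) \<open>a = S\<close> kS[of S] assms by (simp add: rep_eq)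
  next
    assume "a' = S"
    then have "kBOM S a = m" using keq kS[of S] assms(1) by simp
    then show "a = S" using assms(4) \<open>a' = S\<close> kS[of S] assms by (simp add: rep_eq)
  qed
  show ?thesis unfolding fBOM_def gBOM_def using aa keq by simp
qed

end
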